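(* Let $\beta\in(0,d]$, let $Q$ be a cube in $\mathbb{R}^d$ and $f \in L^1(Q;\mathcal{H}^{\beta,Q}_\infty)$. Then for every $\lambda>0$ such that $$\lambda \geq \frac{1}{l(Q)^\beta} \int_Q |f| \, d\mathcal{H}^{\beta,Q}_\infty,$$ there exists a countable collection of non-overlapping cubes $\{ Q_k\}\subset \mathcal{D}(Q)$, each contained in $Q$, such that (1) $\lambda< \frac{1}{l(Q_k)^\beta} \int_{Q_k} |f| \, d\mathcal{H}^{\beta,Q}_\infty \leq 2^\beta \lambda$ for every $k$; (2) $|f(x)| \leq \lambda$ for $\mathcal{H}^\beta$-a.e. $x\in Q \setminus \bigcup_k Q_k$.
   Context: For a cube $Q=a+[0,\ell)^d$ (cubes are half-open), $\mathcal{D}(Q)=\{a+2^{-j}\ell(m+[0,1)^d): j\in\mathbb{Z}, m\in\mathbb{Z}^d\}$. $\mathcal{H}^{\beta,Q}_{\infty}(E)= \inf \{\sum_{i} l(Q_i)^\beta : E \subset \bigcup_{i} Q_i,\ Q_i \in \mathcal{D}(Q) \}$, $l(\cdot)$ the side length. For $f\ge0$ and a set $A$, $\int_A f\,d\mathcal{H}^{\beta,Q}_\infty=\int_0^\infty \mathcal{H}^{\beta,Q}_\infty(\{x\in A:f(x)>t\})\,dt$. $f$ is $\mathcal{H}^{\beta,Q}_\infty$-quasicontinuous if for every $\epsilon>0$ there is an open $O$ with $\mathcal{H}^{\beta,Q}_\infty(O)<\epsilon$ and $f|_{O^c}$ continuous; $L^1(Q;\mathcal{H}^{\beta,Q}_\infty)$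 is the set of such $f$ with $\int_{Q}|f|\,d\mathcal{H}^{\beta,Q}_\infty<\infty$. $\mathcal{H}^\beta$ denotes the $\beta$-dimensional Hausdorff measure. *)

theory Defs
  imports "HOL-Analysis.Analysis"
begin

definition hcube :: "'a::euclidean_space \<Rightarrow> real \<Rightarrow> 'a set" where
  "hcube a l = {x. \<forall>i\<in>Basis. a \<bullet> i \<le> x \<bullet> i \<and> x \<bullet> i < a \<bullet> i + l}"

text \<open>Parameters (corner, side length) of the dyadic cubes D(Q) of the cube Q = hcube a l:
  a + 2^(-j) l (m + [0,1)^d), j integer, m in Z^d.\<close>
definition dyadic_params :: "'a::euclidean_space \<Rightarrow> real \<Rightarrow> ('a \<times> real) set" where
  "dyadic_params a l = {(b, s). \<exists>(j::int) (m::'a). (\<forall>i\<in>Basis. m \<bullet> i \<in> \<int>) \<and>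
      s = 2 powr (- real_of_int j) * l \<and> b = a + s *\<^sub>R m}"

text \<open>Dyadic Hausdorff content H^{beta,Q}_infty, Q = hcube a l.  A countable cover is a
  sequence of optional dyadic cubes (None = no cube, which allows finite covers).\<close>
definition dyadic_content :: "real \<Rightarrow> 'a::euclidean_space \<Rightarrow> real \<Rightarrow> 'a set \<Rightarrow> ennreal" where
  "dyadic_content \<beta> a l E =
     (INF c \<in> {c :: nat \<Rightarrow> ('a \<times> real) option.
                 (\<forall>n. c n = None \<or> the (c n) \<in> dyadic_params a l) \<and>
                 E \<subseteq> (\<Union>n\<in>{n. c n \<noteq> None}. hcube (fst (the (c n))) (snd (the (c n))))}.
        (\<Sum>n. (case c n of None \<Rightarrow> 0 | Some (b, s) \<Rightarrow> ennreal (s powr \<beta>))))"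

definition dyadic_choquet :: "real \<Rightarrow> 'a::euclidean_space \<Rightarrow> real \<Rightarrow> 'a set \<Rightarrow> ('a \<Rightarrow> real) \<Rightarrow> ennreal" where
  "dyadic_choquet \<beta> a l A f =
     (\<integral>\<^sup>+ t. indicator {0<..} t * dyadic_content \<beta> a l {x \<in> A. f x > t} \<partial>lborel)"

definition dyadic_quasicont :: "real \<Rightarrow> 'a::euclidean_space \<Rightarrow> real \<Rightarrow> ('a \<Rightarrow> real) \<Rightarrow> bool" where
  "dyadic_quasicont \<beta> a l f \<longleftrightarrow>
     (\<forall>\<epsilon>>0. \<exists>U. open U \<and> dyadic_content \<beta> a l U < ennreal \<epsilon> \<and> continuous_on (hcube a l - U) f)"

definition dyadic_L1 :: "real \<Rightarrow> 'a::euclidean_space \<Rightarrow> real \<Rightarrow> ('a \<Rightarrow> real) set" where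
  "dyadic_L1 \<beta> a l = {f. dyadic_quasicont \<beta> a l f \<and>
      dyadic_choquet \<beta> a l (hcube a l) (\<lambda>x. \<bar>f x\<bar>) < \<infinity>}"

text \<open>beta-dimensional Hausdorff (outer) measure (without normalising constant, which does
  not affect null sets): sup over delta>0 of inf of sum diam(C_n)^beta over countable covers
  by sets of diameter at most delta.\<close>
definition hausdorff_measure :: "real \<Rightarrow> 'a::euclidean_space set \<Rightarrow> ennreal" where
  "hausdorff_measure \<beta> E =
     (SUP \<delta> \<in> {0<..}. INF C \<in> {C :: nat \<Rightarrow> 'a set. E \<subseteq> (\<Union>n. C n) \<and> (\<forall>n. diameter (C n) \<le> \<delta>)}.
        (\<Sum>n. ennreal (if C n = {} then 0 else diameter (C n) powr \<beta>)))"

end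

theory Submission
  imports Defs
begin


definition Zv :: "'a::euclidean_space set" where "Zv = {m. \<forall>i\<in>Basis. m \<bullet> i \<in> \<int>}"
definition sz :: "real \<Rightarrow> int \<Rightarrow> real" where "sz l j = 2 powr (- real_of_int j) * l"
definition dcube :: "'a::euclidean_space \<Rightarrow> real \<Rightarrow> int \<Rightarrow> 'a \<Rightarrow> 'a set" where
  "dcube a l j m = hcube (a + sz l j *\<^sub>R m) (sz l j)"
definition idx :: "'a::euclidean_space \<Rightarrow> real \<Rightarrow> int \<Rightarrow> 'a \<Rightarrow> 'a" where
  "idx a l j x = (\<Sum>i\<in>Basis. of_int \<lfloor>((x - a) \<bullet> i) / sz l j\<rfloor> *\<^sub>R i)"

lemma sz_pos: "0 < l \<Longrightarrow> 0 < sz l j"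
  by (simp add: sz_def)

lemma sz_0[simp]: "sz l 0 = l"
  by (simp add: sz_def)

lemma sz_mono_iff: "0 < l \<Longrightarrow> sz l j \<le> sz l j' \<longleftrightarrow> j' \<le> j"
  by (simp add: sz_def)

lemma sz_less_iff: "0 < l \<Longrightarrow> sz l j < sz l j' \<longleftrightarrow> j' < j"
  by (simp add: sz_def)

lemma sz_minus1: "sz l (j - 1) = 2 * sz l j"
proof -
  have "2 powr (1 - real_of_int j) = 2 powr 1 * 2 powr (- real_of_int j)"
    using powr_add[of 2 1 "- real_of_int j"] by simp
  then show ?thesis by (simp add: sz_def)
qed

lemma sz_pow: "k \<ge> 0 \<Longrightarrow> sz l j = sz l (j + k) * real_of_int (2 ^ nat k)"
proof -
  assume k: "k \<ge> 0"
  have "real_of_int (2 ^ nat k) = 2 powr real_of_int k"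
    using k by (simp add: powr_realpow[symmetric])
  then show ?thesis by (simp add: sz_def powr_add[symmetric] algebra_simps)
qed

lemma idx_inner: "i \<in> Basis \<Longrightarrow> idx a l j x \<bullet> i = of_int \<lfloor>((x - a) \<bullet> i) / sz l j\<rfloor>"
  by (simp add: idx_def)

lemma idx_Zv: "idx a l j x \<in> Zv"
  by (simp add: Zv_def idx_inner)

lemma mem_hcube: "x \<in> hcube b s \<longleftrightarrow> (\<forall>i\<in>Basis. b \<bullet> i \<le> x \<bullet> i \<and> x \<bullet> i < b \<bullet> i + s)"
  by (simp add: hcube_def)

lemma mem_dcube:
  assumes l: "0 < l" and m: "m \<in> Zv"
  shows "x \<in> dcube a l j m \<longleftrightarrow> m = idx a l j x"
proof -
  define s where "s = sz l j"
  have s: "0 < s" using l by (simp add: s_def sz_pos)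
  have "x \<in> dcube a l j m \<longleftrightarrow> (\<forall>i\<in>Basis. m \<bullet> i = idx a l j x \<bullet> i)"
  proof -
    have "(a \<bullet> i + s * (m \<bullet> i) \<le> x \<bullet> i \<and> x \<bullet> i < a \<bullet> i + s * (m \<bullet> i) + s)
        \<longleftrightarrow> m \<bullet> i = idx a l j x \<bullet> i" if i: "i \<in> Basis" for i
    proof -
      obtain z where z: "m \<bullet> i = of_int z" using m i unfolding Zv_def by (auto elim: Ints_cases)
      have "(a \<bullet> i + s * (m \<bullet> i) \<le> x \<bullet> i \<and> x \<bullet> i < a \<bullet> i + s * (m \<bullet> i) + s)
          \<longleftrightarrow> (of_int z \<le> (x \<bullet> i - a \<bullet> i) / s \<and> (x \<bullet> i - a \<bullet> i) / s < of_int z + 1)"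
        using s by (simp add: z field_simps)
      also have "\<dots> \<longleftrightarrow> \<lfloor>(x \<bullet> i - a \<bullet> i) / s\<rfloor> = z"
        by (simp add: floor_eq_iff)
      also have "\<dots> \<longleftrightarrow> m \<bullet> i = idx a l j x \<bullet> i"
        using i by (auto simp: idx_inner z s_def inner_diff_left)
      finally show ?thesis .
    qed
    then show ?thesis
      by (simp add: dcube_def hcube_def s_def[symmetric] inner_add_left algebra_simps)
  qed
  also have "\<dots> \<longleftrightarrow> m = idx a l j x"
    by (metis euclidean_eqI)
  finally show ?thesis .
qed

lemma idx_mono:
  assumes l: "0 < l" and jj: "j \<le> j'" and e: "idx a l j' x = idx a l j' y"
  shows "idx a l j x = idx a l j y"
proof (rule euclidean_eqI)
  fix i :: 'a assume i: "i \<in> Basis"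
  define k where "k = j' - j"
  have k: "k \<ge> 0" using jj by (simp add: k_def)
  have eq: "sz l j = sz l j' * real_of_int (2 ^ nat k)"
    using sz_pow[OF k, of l j] by (simp add: k_def)
  have fl: "\<lfloor>t / sz l j\<rfloor> = \<lfloor>t / sz l j'\<rfloor> div 2 ^ nat k" for t
  proof -
    have tt: "t / sz l j = (t / sz l j') / real_of_int (2 ^ nat k)"
      by (simp add: eq)
    show ?thesis unfolding tt by (rule floor_divide_real_eq_div) simp
  qed
  have "\<lfloor>((x - a) \<bullet> i) / sz l j'\<rfloor> = \<lfloor>((y - a) \<bullet> i) / sz l j'\<rfloor>"
    using arg_cong[OF e, of "\<lambda>v. v \<bullet> i"] i by (simp add: idx_inner)
  then show "idx a l j x \<bullet> i = idx a l j y \<bullet> i"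
    using i by (simp add: idx_inner fl)
qed

lemma dcube_nest:
  assumes l: "0 < l" and jj: "j \<le> j'" and m: "m \<in> Zv" and m': "m' \<in> Zv"
    and x: "x \<in> dcube a l j m" "x \<in> dcube a l j' m'"
  shows "dcube a l j' m' \<subseteq> dcube a l j m"
proof
  fix y assume y: "y \<in> dcube a l j' m'"
  have "idx a l j' y = idx a l j' x" using x y mem_dcube[OF l m'] by auto
  then have "idx a l j y = idx a l j x" by (rule idx_mono[OF l jj])
  then show "y \<in> dcube a l j m" using x mem_dcube[OF l m] by auto
qed

lemma corner_in_dcube: "0 < l \<Longrightarrow> a + sz l j *\<^sub>R m \<in> dcube a l j m"
  using sz_pos[of l j] by (auto simp: dcube_def hcube_def)

lemma dcube_00: "dcube a l 0 0 = hcube a l"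
  by (simp add: dcube_def)

lemma zero_Zv: "0 \<in> Zv" by (simp add: Zv_def)

lemma hcube_size:
  assumes s: "0 < s" and sub: "hcube b s \<subseteq> hcube b' s'"
  shows "s \<le> s'"
proof (rule ccontr)
  assume "\<not> s \<le> s'"
  then have lt: "s' < s" by simp
  obtain i :: 'a where i: "i \<in> Basis" using nonempty_Basis by blast
  define t where "t = max 0 s'"
  have t: "0 \<le> t" "t < s" using lt s by (auto simp: t_def)
  have "b + t *\<^sub>R i \<in> hcube b s"
    using t i by (auto simp: hcube_def inner_add_left inner_Basis)
  moreover have "b \<in> hcube b s" using s by (auto simp: hcube_def)
  ultimately have "b + t *\<^sub>R i \<in> hcube b' s'" "b \<in> hcube b' s'" using sub by auto
  then have "b' \<bullet> i \<le> b \<bullet> i" "b \<bullet> i + t < b' \<bullet> i + s'"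
    using i by (auto simp: hcube_def inner_add_left inner_Basis)
  then show False using t by (simp add: t_def)
qed

lemma hcube_dist:
  fixes x :: "'a::euclidean_space"
  assumes "x \<in> hcube b s" "y \<in> hcube b s"
  shows "dist x y \<le> real DIM('a) * s" 
proof -
  have "dist x y = norm (x - y)" by (simp add: dist_norm)
  also have "\<dots> \<le> (\<Sum>i\<in>(Basis::'a set). \<bar>(x - y) \<bullet> i\<bar>)" by (rule norm_le_l1)
  also have "\<dots> \<le> (\<Sum>i\<in>(Basis::'a set). s)"
  proof (rule sum_mono)
    fix i :: 'a assume "i \<in> Basis"
    then have "b \<bullet> i \<le> x \<bullet> i" "x \<bullet> i < b \<bullet> i + s" "b \<bullet> i \<le> y \<bullet> i" "y \<bullet> i < b \<bullet> i + s"
      using assms by (auto simp: hcube_def)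
    then show "\<bar>(x - y) \<bullet> i\<bar> \<le> s" by (simp add: inner_diff_left)
  qed
  finally show ?thesis by simp
qed

lemma countable_Zv: "countable (Zv :: 'a::euclidean_space set)"
proof (rule countable_image_inj_on)
  show "inj_on (\<lambda>m::'a. restrict (\<lambda>i. m \<bullet> i) Basis) Zv"
    by (rule inj_onI) (metis euclidean_eqI restrict_apply')
  have "(\<lambda>m::'a. restrict (\<lambda>i. m \<bullet> i) Basis) ` Zv \<subseteq> Pi\<^sub>E Basis (\<lambda>_. \<int>)"
    by (auto simp: Zv_def)
  moreover have "countable (Pi\<^sub>E (Basis::'a set) (\<lambda>_. \<int>))"
    by (rule countable_PiE) (auto simp: Ints_def)
  ultimately show "countable ((\<lambda>m::'a. restrict (\<lambda>i. m \<bullet> i) Basis) ` Zv)"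
    by (rule countable_subset)
qed



definition cst :: "real \<Rightarrow> ('a \<times> real) option \<Rightarrow> ennreal" where
  "cst \<beta> o' = (case o' of None \<Rightarrow> 0 | Some (b, s) \<Rightarrow> ennreal (s powr \<beta>))"

definition covers :: "'a::euclidean_space \<Rightarrow> real \<Rightarrow> 'a set \<Rightarrow> (nat \<Rightarrow> ('a \<times> real) option) \<Rightarrow> bool" where
  "covers a l E c \<longleftrightarrow> (\<forall>n. c n = None \<or> the (c n) \<in> dyadic_params a l) \<and>
                 E \<subseteq> (\<Union>n\<in>{n. c n \<noteq> None}. hcube (fst (the (c n))) (snd (the (c n))))"

lemma dc_def': "dyadic_content \<beta> a l E = (INF c \<in> {c. covers a l E c}. (\<Sum>n. cst \<beta> (c n)))"
  unfolding dyadic_content_def covers_def cst_def by simp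

lemma dc_le: "covers a l E c \<Longrightarrow> dyadic_content \<beta> a l E \<le> (\<Sum>n. cst \<beta> (c n))"
  unfolding dc_def' by (rule INF_lower) simp

lemma dc_lessE:
  assumes "dyadic_content \<beta> a l E < y"
  obtains c where "covers a l E c" "(\<Sum>n. cst \<beta> (c n)) < y"
  using assms unfolding dc_def' INF_less_iff by auto

lemma dc_mono: "A \<subseteq> B \<Longrightarrow> dyadic_content \<beta> a l A \<le> dyadic_content \<beta> a l B"
proof -
  assume AB: "A \<subseteq> B"
  have "covers a l A c" if "covers a l B c" for c
    using that AB unfolding covers_def by blast
  then show ?thesis unfolding dc_def' by (intro INF_superset_mono) auto
qed

lemma dcube_params: "m \<in> Zv \<Longrightarrow> (a + sz l j *\<^sub>R m, sz l j) \<in> dyadic_params a l"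
  unfolding dyadic_params_def Zv_def sz_def by blast

lemma dc_cube:
  assumes m: "m \<in> Zv" and A: "A \<subseteq> dcube a l j m"
  shows "dyadic_content \<beta> a l A \<le> ennreal (sz l j powr \<beta>)"
proof -
  define c where "c = (\<lambda>n::nat. if n = 0 then Some (a + sz l j *\<^sub>R m, sz l j) else None)"
  have "covers a l A c"
    using A dcube_params[OF m] unfolding covers_def c_def dcube_def by auto
  then have "dyadic_content \<beta> a l A \<le> (\<Sum>n. cst \<beta> (c n))" by (rule dc_le)
  also have "(\<Sum>n. cst \<beta> (c n)) = ennreal (sz l j powr \<beta>)"
  proof -
    have "(\<lambda>n. cst \<beta> (c n)) = (\<lambda>n. if n = 0 then ennreal (sz l j powr \<beta>) else 0)"
      by (auto simp: c_def cst_def)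
    then show ?thesis using sums_unique[OF sums_single[of 0 "\<lambda>_. ennreal (sz l j powr \<beta>)"]]
      by simp
  qed
  finally show ?thesis .
qed

lemma dc_Q: "0 < l \<Longrightarrow> A \<subseteq> hcube a l \<Longrightarrow> dyadic_content \<beta> a l A \<le> ennreal (l powr \<beta>)"
  using dc_cube[OF zero_Zv, of A a l 0 \<beta>] by (simp add: dcube_00)

lemma dc_empty: "dyadic_content \<beta> a l {} = 0"
proof -
  have "covers a l {} (\<lambda>_. None)" by (simp add: covers_def)
  from dc_le[OF this, of \<beta>] show ?thesis by (simp add: cst_def)
qed

lemma dc_subadd:
  "dyadic_content \<beta> a l (\<Union>n. A n) \<le> (\<Sum>n. dyadic_content \<beta> a l (A n))"
proof (rule ennreal_le_epsilon)
  fix e :: real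
  assume fin: "(\<Sum>n. dyadic_content \<beta> a l (A n)) < top" and e: "0 < e"
  define eps where "eps n = e * (1/2) ^ Suc n" for n
  have eps: "0 < eps n" for n using e by (simp add: eps_def)
  have ex: "\<forall>n. \<exists>c. covers a l (A n) c \<and> (\<Sum>k. cst \<beta> (c k)) < dyadic_content \<beta> a l (A n) + ennreal (eps n)"
  proof
    fix n show "\<exists>c. covers a l (A n) c \<and> (\<Sum>k. cst \<beta> (c k)) < dyadic_content \<beta> a l (A n) + ennreal (eps n)"
  proof -
    have "dyadic_content \<beta> a l (A n) < top"
      using ennreal_suminf_lessD[OF fin] by blast
    then have "dyadic_content \<beta> a l (A n) < dyadic_content \<beta> a l (A n) + ennreal (eps n)"
      using eps[of n] by (simp add: ennreal_add_left_cancel_less)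
    then obtain c where "covers a l (A n) c" "(\<Sum>k. cst \<beta> (c k)) < dyadic_content \<beta> a l (A n) + ennreal (eps n)"
      by (rule dc_lessE)
    then show ?thesis by blast
  qed
  qed
  from choice[OF ex] obtain C where CC: "\<forall>n. covers a l (A n) (C n) \<and>
     (\<Sum>k. cst \<beta> (C n k)) < dyadic_content \<beta> a l (A n) + ennreal (eps n)" by blast
  then have C: "\<And>n. covers a l (A n) (C n)"
    "\<And>n. (\<Sum>k. cst \<beta> (C n k)) < dyadic_content \<beta> a l (A n) + ennreal (eps n)"
    by auto
  define c where "c i = (case prod_decode i of (n, k) \<Rightarrow> C n k)" for i
  have cov: "covers a l (\<Union>n. A n) c"
    unfolding covers_def
  proof (intro conjI allI subsetI)
    fix i
    obtain n k where nk: "prod_decode i = (n, k)" by (cases "prod_decode i")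
    then have "c i = C n k" by (simp add: c_def)
    moreover have "C n k = None \<or> the (C n k) \<in> dyadic_params a l"
      using C(1)[of n] unfolding covers_def by blast
    ultimately show "c i = None \<or> the (c i) \<in> dyadic_params a l" by simp
  next
    fix x assume "x \<in> (\<Union>n. A n)"
    then obtain n where x: "x \<in> A n" by blast
    then obtain k where k: "C n k \<noteq> None" "x \<in> hcube (fst (the (C n k))) (snd (the (C n k)))"
      using C(1)[of n] unfolding covers_def by blast
    have "c (prod_encode (n, k)) = C n k" by (simp add: c_def)
    then show "x \<in> (\<Union>i\<in>{i. c i \<noteq> None}. hcube (fst (the (c i))) (snd (the (c i))))"
      using k by (intro UN_I[of "prod_encode (n, k)"]) auto
  qed
  have "dyadic_content \<beta> a l (\<Union>n. A n) \<le> (\<Sum>i. cst \<beta> (c i))" by (rule dc_le[OF cov])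
  also have "(\<Sum>i. cst \<beta> (c i)) = (\<Sum>n. (\<Sum>k. cst \<beta> (C n k)))"
    using suminf_ennreal_2dimen[of "\<lambda>n. (\<Sum>k. cst \<beta> (C n k))" "\<lambda>(n,k). cst \<beta> (C n k)"]
    by (simp add: c_def case_prod_beta)
  also have "\<dots> \<le> (\<Sum>n. dyadic_content \<beta> a l (A n) + ennreal (eps n))"
    by (rule suminf_le) (use C(2) in \<open>auto intro: less_imp_le\<close>)
  also have "\<dots> = (\<Sum>n. dyadic_content \<beta> a l (A n)) + (\<Sum>n. ennreal (eps n))"
    by (rule suminf_add[symmetric]) simp_all
  also have "(\<Sum>n. ennreal (eps n)) = ennreal e"
  proof -
    have "(\<lambda>n. eps n) sums (e * 1)" unfolding eps_def
      by (rule sums_mult[OF power_half_series])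
    then have "(\<Sum>n. eps n) = e \<and> summable eps" by (auto simp: sums_iff)
    then have se: "(\<Sum>n. eps n) = e" and sm: "summable eps" by auto
    have "(\<Sum>n. ennreal (eps n)) = ennreal (\<Sum>n. eps n)"
      by (rule suminf_ennreal2) (use eps sm in \<open>auto intro: less_imp_le\<close>)
    then show ?thesis by (simp only: se)
  qed
  finally show "dyadic_content \<beta> a l (\<Union>n. A n) \<le> (\<Sum>n. dyadic_content \<beta> a l (A n)) + ennreal e" .
qed

lemma dc_union_zero:
  assumes I: "countable I" and z: "\<And>i. i \<in> I \<Longrightarrow> dyadic_content \<beta> a l (A i) = 0"
  shows "dyadic_content \<beta> a l (\<Union>i\<in>I. A i) = 0"
proof (cases "I = {}")
  case True then show ?thesis by (simp add: dc_empty)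
next
  case False
  have "(\<Union>i\<in>I. A i) = (\<Union>i\<in>range (from_nat_into I). A i)"
    using range_from_nat_into[OF False I] by simp
  then have eq: "(\<Union>i\<in>I. A i) = (\<Union>n. A (from_nat_into I n))"
    by (simp add: image_image)
  have "dyadic_content \<beta> a l (\<Union>n. A (from_nat_into I n)) \<le> (\<Sum>n. dyadic_content \<beta> a l (A (from_nat_into I n)))"
    by (rule dc_subadd)
  also have "\<dots> = 0" using z from_nat_into[OF False] by simp
  finally show ?thesis by (simp add: eq)
qed

lemma dc_Un: "dyadic_content \<beta> a l (A \<union> B) \<le> dyadic_content \<beta> a l A + dyadic_content \<beta> a l B"
proof -
  define F where "F n = (if n = 0 then A else if n = 1 then B else {})" for n :: nat
  have "A \<union> B = (\<Union>n. F n)" by (auto simp: F_def split: if_splits)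
  then have "dyadic_content \<beta> a l (A \<union> B) \<le> (\<Sum>n. dyadic_content \<beta> a l (F n))"
    using dc_subadd by metis
  also have "\<dots> = (\<Sum>n\<in>{0,1}. dyadic_content \<beta> a l (F n))"
    by (rule suminf_finite) (auto simp: F_def dc_empty)
  also have "\<dots> = dyadic_content \<beta> a l A + dyadic_content \<beta> a l B"
    by (simp add: F_def)
  finally show ?thesis .
qed



lemma in_own_dcube: assumes "0 < l" shows "x \<in> dcube a l j (idx a l j x)"
  using mem_dcube[OF assms idx_Zv[of a l j x]] by simp

lemma params_E:
  assumes "(b, s) \<in> dyadic_params a l"
  obtains j m where "m \<in> Zv" "s = sz l j" "b = a + sz l j *\<^sub>R m"
  using assms unfolding dyadic_params_def Zv_def sz_def by blast

lemma cell_zero: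
  assumes l: "0 < l" and b: "0 < \<beta>" and e0: "0 \<le> \<epsilon>" and e1: "\<epsilon> < 1" and m: "m \<in> Zv"
    and hyp: "\<And>x j. x \<in> F \<Longrightarrow> J \<le> j \<Longrightarrow>
       dyadic_content \<beta> a l (F \<inter> dcube a l j (idx a l j x)) \<le> ennreal \<epsilon> * ennreal (sz l j powr \<beta>)"
  shows "dyadic_content \<beta> a l (F \<inter> dcube a l J m) = 0"
proof (cases "F \<inter> dcube a l J m = {}")
  case True then show ?thesis by (simp add: dc_empty)
next
  case False
  define P where "P = dcube a l J m"
  define h where "h = dyadic_content \<beta> a l (F \<inter> P)"
  define SJ where "SJ = sz l J powr \<beta>"
  have SJ: "0 < SJ" using sz_pos[OF l, of J] by (simp add: SJ_def)
  obtain x0 where x0: "x0 \<in> F" "x0 \<in> P" using False P_def by blast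
  have "m = idx a l J x0" using x0(2) mem_dcube[OF l m] P_def by simp
  then have hle: "h \<le> ennreal \<epsilon> * ennreal SJ"
    using hyp[OF x0(1) order_refl] by (simp add: h_def P_def SJ_def)
  then obtain r where r: "h = ennreal r" "0 \<le> r"
    by (metis ennreal_cases ennreal_mult' ennreal_mult_eq_top_iff ennreal_neq_top neq_top_trans top.extremum_unique e0)
  have hr: "r \<le> \<epsilon> * SJ" using hle r e0 SJ
    by (simp add: ennreal_mult'[symmetric] ennreal_le_iff)
  have key: "r \<le> \<epsilon> * (r + \<eta>)" if eta: "0 < \<eta>" for \<eta>
  proof -
    define y where "y = min (r + \<eta>) SJ"
    have "r < y" using hr e1 SJ eta e0 unfolding y_def
      by (smt (verit) mult_less_cancel_right2)
    then have "h < ennreal y" using r by (simp add: ennreal_less_iff)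
    then obtain c where cov: "covers a l (F \<inter> P) c" and cs: "(\<Sum>n. cst \<beta> (c n)) < ennreal y"
      unfolding h_def by (rule dc_lessE)
    define cb where "cb n = (case c n of None \<Rightarrow> {} | Some (b, s) \<Rightarrow> hcube b s)" for n
    have bound: "dyadic_content \<beta> a l (F \<inter> P \<inter> cb n) \<le> ennreal \<epsilon> * cst \<beta> (c n)" for n
    proof (cases "c n")
      case None then show ?thesis by (simp add: cb_def dc_empty)
    next
      case (Some p)
      obtain b s where p: "p = (b, s)" by (cases p)
      have "c n = None \<or> the (c n) \<in> dyadic_params a l" using cov unfolding covers_def by blast
      then have inP: "(b, s) \<in> dyadic_params a l" using Some p by simp
      then obtain j m' where jm: "m' \<in> Zv" "s = sz l j" "b = a + sz l j *\<^sub>R m'" by (rule params_E)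
      have "cst \<beta> (c n) < ennreal y" by (rule ennreal_suminf_lessD[OF cs])
      then have "ennreal (s powr \<beta>) < ennreal y" using Some p by (simp add: cst_def)
      then have "s powr \<beta> < y" by (simp add: ennreal_less_iff)
      then have "s powr \<beta> < SJ" unfolding y_def by simp
      then have "s < sz l J" unfolding SJ_def
        using powr_mono2[of \<beta> "sz l J" s] b sz_pos[OF l] by (metis less_le_not_le not_le less_imp_le)
      then have jJ: "J < j" using sz_less_iff[OF l] jm(2) by simp
      show ?thesis
      proof (cases "F \<inter> P \<inter> cb n = {}")
        case True then show ?thesis by (simp add: dc_empty)
      next
        case False
        then obtain x where x: "x \<in> F" "x \<in> hcube b s" using Some p cb_def by auto
        have "x \<in> dcube a l j m'" using x jm by (simp add: dcube_def)
        then have "m' = idx a l j x" using mem_dcube[OF l jm(1)] by simp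
        then have cbd: "cb n = dcube a l j (idx a l j x)"
          using Some p jm by (simp add: cb_def dcube_def)
        have "dyadic_content \<beta> a l (F \<inter> P \<inter> cb n) \<le> dyadic_content \<beta> a l (F \<inter> cb n)"
          by (rule dc_mono) blast
        also have "\<dots> \<le> ennreal \<epsilon> * ennreal (sz l j powr \<beta>)"
          unfolding cbd using hyp[OF x(1)] jJ by simp
        finally show ?thesis using Some p jm by (simp add: cst_def)
      qed
    qed
    have "F \<inter> P \<subseteq> (\<Union>n. F \<inter> P \<inter> cb n)"
    proof
      fix x assume x: "x \<in> F \<inter> P"
      then obtain n where "c n \<noteq> None" "x \<in> hcube (fst (the (c n))) (snd (the (c n)))"
        using cov unfolding covers_def by blast
      then have "x \<in> cb n" by (auto simp: cb_def)
      then show "x \<in> (\<Union>n. F \<inter> P \<inter> cb n)" using x by blast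
    qed
    then have "h \<le> dyadic_content \<beta> a l (\<Union>n. F \<inter> P \<inter> cb n)" unfolding h_def by (rule dc_mono)
    also have "\<dots> \<le> (\<Sum>n. dyadic_content \<beta> a l (F \<inter> P \<inter> cb n))" by (rule dc_subadd)
    also have "\<dots> \<le> (\<Sum>n. ennreal \<epsilon> * cst \<beta> (c n))" by (rule suminf_le) (use bound in auto)
    also have "\<dots> = ennreal \<epsilon> * (\<Sum>n. cst \<beta> (c n))" by simp
    also have "\<dots> \<le> ennreal \<epsilon> * ennreal y" by (rule mult_left_mono) (use cs in auto)
    also have "\<dots> \<le> ennreal (\<epsilon> * (r + \<eta>))"
      using e0 r eta by (simp add: ennreal_mult'[symmetric] y_def mult_left_mono)
    finally show ?thesis using r e0 eta by (simp add: ennreal_le_iff)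
  qed
  have "r = 0"
  proof (rule ccontr)
    assume "r \<noteq> 0"
    then have rp: "0 < r" using r by simp
    have "r \<le> \<epsilon> * (r + (1 - \<epsilon>) * r)" using key[of "(1 - \<epsilon>) * r"] rp e1 by simp
    moreover have "\<epsilon> * (r + (1 - \<epsilon>) * r) = r - (1 - \<epsilon>)^2 * r" by (simp add: algebra_simps power2_eq_square)
    moreover have "0 < (1 - \<epsilon>)^2 * r" using e1 rp by simp
    ultimately show False by linarith
  qed
  then show ?thesis using r by (simp add: h_def P_def)
qed

lemma density_zero:
  assumes l: "0 < l" and b: "0 < \<beta>" and e0: "0 \<le> \<epsilon>" and e1: "\<epsilon> < 1"
    and hyp: "\<And>x j. x \<in> F \<Longrightarrow> J \<le> j \<Longrightarrow>
       dyadic_content \<beta> a l (F \<inter> dcube a l j (idx a l j x)) \<le> ennreal \<epsilon> * ennreal (sz l j powr \<beta>)"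
  shows "dyadic_content \<beta> a l F = 0"
proof -
  have "F \<subseteq> (\<Union>m\<in>Zv. F \<inter> dcube a l J m)"
  proof
    fix x assume "x \<in> F"
    moreover have "x \<in> dcube a l J (idx a l J x)" by (rule in_own_dcube[OF l])
    ultimately show "x \<in> (\<Union>m\<in>Zv. F \<inter> dcube a l J m)" using idx_Zv by blast
  qed
  then have "dyadic_content \<beta> a l F \<le> dyadic_content \<beta> a l (\<Union>m\<in>Zv. F \<inter> dcube a l J m)"
    by (rule dc_mono)
  also have "\<dots> = 0"
    by (rule dc_union_zero[OF countable_Zv]) (rule cell_zero[OF l b e0 e1 _ hyp])
  finally show ?thesis by simp
qed

lemma choq_mono: "A \<subseteq> B \<Longrightarrow> dyadic_choquet \<beta> a l A g \<le> dyadic_choquet \<beta> a l B g"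
  unfolding dyadic_choquet_def
  by (intro nn_integral_mono mult_left_mono dc_mono) auto

lemma choq_lower:
  assumes c: "0 < c" and S: "S \<subseteq> A" and g: "\<And>y. y \<in> S \<Longrightarrow> c < g y"
  shows "ennreal c * dyadic_content \<beta> a l S \<le> dyadic_choquet \<beta> a l A g"
proof -
  have "(\<integral>\<^sup>+ t. dyadic_content \<beta> a l S * indicator {0<..<c} t \<partial>lborel)
      \<le> dyadic_choquet \<beta> a l A g"
    unfolding dyadic_choquet_def
  proof (rule nn_integral_mono)
    fix t :: real
    show "dyadic_content \<beta> a l S * indicator {0<..<c} t
       \<le> indicator {0<..} t * dyadic_content \<beta> a l {x \<in> A. t < g x}"
    proof (cases "t \<in> {0<..<c}")
      case True
      then have "S \<subseteq> {x \<in> A. t < g x}" using S g by force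
      then show ?thesis using True by (simp add: dc_mono)
    qed simp
  qed
  moreover have "(\<integral>\<^sup>+ t. dyadic_content \<beta> a l S * indicator {0<..<c} t \<partial>lborel)
      = dyadic_content \<beta> a l S * ennreal c"
    using c by (subst nn_integral_cmult_indicator) auto
  ultimately show ?thesis by (simp add: mult.commute)
qed

lemma hcube_bounded: "bounded (hcube b s)"
proof -
  have "hcube b s \<subseteq> cball b (real DIM('a) * s)" if "b \<in> hcube b s"
    using hcube_dist[OF that] by (auto simp: dist_commute)
  moreover have "hcube b s = {}" if "b \<notin> hcube b s"
    using that by (auto simp: hcube_def)
  ultimately show ?thesis by (metis bounded_cball bounded_empty bounded_subset)
qed

lemma hausdorff_zero:
  fixes E :: "'a::euclidean_space set"
  assumes l: "0 < l" and b: "0 < \<beta>" and z: "dyadic_content \<beta> a l E = 0"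
  shows "hausdorff_measure \<beta> E = 0"
proof -
  define D where "D = real DIM('a)"
  have D: "1 \<le> D" by (simp add: D_def DIM_positive Suc_leI)
  have DB: "0 < D powr \<beta>" using D by simp
  have "(INF C \<in> {C :: nat \<Rightarrow> 'a set. E \<subseteq> (\<Union>n. C n) \<and> (\<forall>n. diameter (C n) \<le> \<delta>)}.
        (\<Sum>n. ennreal (if C n = {} then 0 else diameter (C n) powr \<beta>))) = 0" if dlt: "0 < \<delta>" for \<delta>
  proof -
    have "(INF C \<in> {C :: nat \<Rightarrow> 'a set. E \<subseteq> (\<Union>n. C n) \<and> (\<forall>n. diameter (C n) \<le> \<delta>)}.
        (\<Sum>n. ennreal (if C n = {} then 0 else diameter (C n) powr \<beta>))) \<le> 0"
    proof (rule ennreal_le_epsilon)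
      fix e :: real assume e: "0 < e"
      define \<eta> where "\<eta> = min (e / D powr \<beta>) ((\<delta> / D) powr \<beta>)"
      have eta: "0 < \<eta>" using e DB dlt D by (simp add: \<eta>_def)
      have "dyadic_content \<beta> a l E < ennreal \<eta>" using z eta by simp
      then obtain c where cov: "covers a l E c" and cs: "(\<Sum>n. cst \<beta> (c n)) < ennreal \<eta>"
        by (rule dc_lessE)
      define C where "C n = (case c n of None \<Rightarrow> {} | Some (b, s) \<Rightarrow> hcube b s)" for n
      have EC: "E \<subseteq> (\<Union>n. C n)"
      proof
        fix x assume "x \<in> E"
        then obtain n where "c n \<noteq> None" "x \<in> hcube (fst (the (c n))) (snd (the (c n)))"
          using cov unfolding covers_def by blast
        then have "x \<in> C n" by (auto simp: C_def)
        then show "x \<in> (\<Union>n. C n)" by blast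
      qed
      have each: "diameter (C n) \<le> \<delta> \<and>
          ennreal (if C n = {} then 0 else diameter (C n) powr \<beta>) \<le> ennreal (D powr \<beta>) * cst \<beta> (c n)" for n
      proof (cases "c n")
        case None then show ?thesis using dlt by (simp add: C_def)
      next
        case (Some p)
        obtain bb s where p: "p = (bb, s)" by (cases p)
        have "c n = None \<or> the (c n) \<in> dyadic_params a l" using cov unfolding covers_def by blast
        then have inP: "(bb, s) \<in> dyadic_params a l" using Some p by simp
        then obtain j m' where jm: "m' \<in> Zv" "s = sz l j" "bb = a + sz l j *\<^sub>R m'" by (rule params_E)
        have s0: "0 < s" using jm sz_pos[OF l] by simp
        have "cst \<beta> (c n) < ennreal \<eta>" by (rule ennreal_suminf_lessD[OF cs])
        then have "ennreal (s powr \<beta>) < ennreal \<eta>" using Some p by (simp add: cst_def)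
        then have "s powr \<beta> < \<eta>" by (simp add: ennreal_less_iff)
        then have "s powr \<beta> < (\<delta> / D) powr \<beta>" unfolding \<eta>_def by simp
        then have sD: "s \<le> \<delta> / D"
          using powr_mono2[of \<beta> "\<delta> / D" s] b dlt D by (metis less_le_not_le not_le less_imp_le divide_nonneg_nonneg order.trans zero_le_one)
        have Cn: "C n = hcube bb s" using Some p by (simp add: C_def)
        have dm: "diameter (C n) \<le> D * s"
          unfolding Cn D_def using s0
          by (intro diameter_le) (auto simp: dist_norm[symmetric] intro: hcube_dist)
        have dm0: "0 \<le> diameter (C n)" unfolding Cn by (rule diameter_ge_0[OF hcube_bounded])
        have "D * s \<le> \<delta>" using sD D by (simp add: field_simps)
        then have d1: "diameter (C n) \<le> \<delta>" using dm by linarith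
        have "(if C n = {} then 0 else diameter (C n) powr \<beta>) \<le> (D * s) powr \<beta>"
          using powr_mono2[of \<beta> "diameter (C n)" "D * s"] dm dm0 b by auto
        also have "\<dots> = D powr \<beta> * s powr \<beta>" using D s0 by (simp add: powr_mult)
        finally have "ennreal (if C n = {} then 0 else diameter (C n) powr \<beta>) \<le> ennreal (D powr \<beta> * s powr \<beta>)"
          by (rule ennreal_leI)
        then show ?thesis using d1 Some p DB by (simp add: cst_def ennreal_mult')
      qed
      have "(INF C \<in> {C :: nat \<Rightarrow> 'a set. E \<subseteq> (\<Union>n. C n) \<and> (\<forall>n. diameter (C n) \<le> \<delta>)}.
        (\<Sum>n. ennreal (if C n = {} then 0 else diameter (C n) powr \<beta>)))
        \<le> (\<Sum>n. ennreal (if C n = {} then 0 else diameter (C n) powr \<beta>))"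
        by (rule INF_lower) (use EC each in auto)
      also have "\<dots> \<le> (\<Sum>n. ennreal (D powr \<beta>) * cst \<beta> (c n))"
        by (rule suminf_le) (use each in auto)
      also have "\<dots> = ennreal (D powr \<beta>) * (\<Sum>n. cst \<beta> (c n))" by simp
      also have "\<dots> \<le> ennreal (D powr \<beta>) * ennreal \<eta>" by (rule mult_left_mono) (use cs in auto)
      also have "\<dots> = ennreal (D powr \<beta> * \<eta>)" using DB eta by (simp add: ennreal_mult')
      also have "\<dots> \<le> ennreal e"
      proof (rule ennreal_leI)
        have "\<eta> \<le> e / D powr \<beta>" by (simp add: \<eta>_def)
        then show "D powr \<beta> * \<eta> \<le> e" using DB by (simp add: field_simps)
      qed
      finally show "(INF C \<in> {C :: nat \<Rightarrow> 'a set. E \<subseteq> (\<Union>n. C n) \<and> (\<forall>n. diameter (C n) \<le> \<delta>)}.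
        (\<Sum>n. ennreal (if C n = {} then 0 else diameter (C n) powr \<beta>))) \<le> 0 + ennreal e" by simp
    qed
    then show ?thesis by simp
  qed
  then show ?thesis unfolding hausdorff_measure_def by simp
qed



lemma div_mul_cancel_en: "0 < S \<Longrightarrow> x / ennreal S * ennreal S = x"
  by (simp add: ennreal_divide_times)

lemma div_le_E1: "0 < S \<Longrightarrow> x / ennreal S \<le> c \<Longrightarrow> x \<le> c * ennreal S"
  by (metis div_mul_cancel_en mult_right_mono zero_le)

lemma div_le_E3:
  assumes "0 < B" "B \<le> A" shows "x / ennreal A \<le> x / ennreal B"
proof (rule divide_le_posI_ennreal)
  show "0 < ennreal A" using assms by simp
  have "x = x / ennreal B * ennreal B" using div_mul_cancel_en[OF assms(1)] by simp
  also have "\<dots> \<le> x / ennreal B * ennreal A" by (rule mult_left_mono) (use assms in auto)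
  finally show "x \<le> ennreal A * (x / ennreal B)" by (simp add: mult.commute)
qed

lemma ennreal_finite_le:
  assumes "y \<le> ennreal B" "0 \<le> B" obtains h where "y = ennreal h" "0 \<le> h" "h \<le> B"
proof -
  obtain h where h: "y = ennreal h" "0 \<le> h"
    using assms by (cases y rule: ennreal_cases) (auto simp: top_unique)
  moreover have "h \<le> B" using assms h
    by (simp add: ennreal_le_iff)
  ultimately show ?thesis using that by blast
qed

theorem theorem3p4:
  fixes \<beta> :: real and a :: "'a::euclidean_space" and l :: real
    and f :: "'a \<Rightarrow> real" and lam :: real
  assumes "0 < \<beta>" and "\<beta> \<le> real DIM('a)"
    and "0 < l"
    and "f \<in> dyadic_L1 \<beta> a l"
    and "0 < lam"
    and "ennreal lam \<ge> dyadic_choquet \<beta> a l (hcube a l) (\<lambda>x. \<bar>f x\<bar>) / ennreal (l powr \<beta>)"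
  shows "\<exists>K. countable K \<and> K \<subseteq> dyadic_params a l \<and>
     (\<forall>(b, s)\<in>K. hcube b s \<subseteq> hcube a l) \<and>
     (\<forall>p\<in>K. \<forall>q\<in>K. p \<noteq> q \<longrightarrow> hcube (fst p) (snd p) \<inter> hcube (fst q) (snd q) = {}) \<and>
     (\<forall>(b, s)\<in>K.
        ennreal lam < dyadic_choquet \<beta> a l (hcube b s) (\<lambda>x. \<bar>f x\<bar>) / ennreal (s powr \<beta>) \<and>
        dyadic_choquet \<beta> a l (hcube b s) (\<lambda>x. \<bar>f x\<bar>) / ennreal (s powr \<beta>) \<le> ennreal (2 powr \<beta> * lam)) \<and>
     hausdorff_measure \<beta> {x \<in> hcube a l - (\<Union>(b, s)\<in>K. hcube b s). \<bar>f x\<bar> > lam} = 0"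
proof -
  note b = assms(1) and l = assms(3) and lam = assms(5)
  define Q where "Q = hcube a l"
  define Ch where "Ch A = dyadic_choquet \<beta> a l A (\<lambda>x. \<bar>f x\<bar>)" for A
  define avg where "avg j m = Ch (dcube a l j m) / ennreal (sz l j powr \<beta>)" for j m
  define good where "good j m \<longleftrightarrow> m \<in> Zv \<and> dcube a l j m \<subseteq> Q \<and> ennreal lam < avg j m" for j m
  define maxl where "maxl j m \<longleftrightarrow> good j m \<and>
     (\<forall>j' m'. good j' m' \<longrightarrow> dcube a l j m \<subseteq> dcube a l j' m' \<longrightarrow> j' = j)" for j m
  define K where "K = {(a + sz l j *\<^sub>R m, sz l j) | j m. maxl j m}"
  have Q00: "Q = dcube a l 0 0" by (simp add: Q_def dcube_00)
  have hypQ: "Ch Q / ennreal (l powr \<beta>) \<le> ennreal lam"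
    using assms(6) by (simp add: Ch_def Q_def)
  have good_pos: "1 \<le> j" if g: "good j m" for j m
  proof (rule ccontr)
    assume "\<not> 1 \<le> j"
    then have j0: "j \<le> 0" by simp
    have m: "m \<in> Zv" and sub: "dcube a l j m \<subseteq> Q" using g by (auto simp: good_def)
    have x: "a + sz l j *\<^sub>R m \<in> dcube a l j m" by (rule corner_in_dcube[OF l])
    have "Q \<subseteq> dcube a l j m"
      unfolding Q00 by (rule dcube_nest[OF l j0 m zero_Zv x]) (use x sub Q00 in auto)
    then have eq: "dcube a l j m = Q" using sub by blast
    have "l \<le> sz l j" using sz_mono_iff[OF l, of 0 j] j0 by simp
    then have "l powr \<beta> \<le> sz l j powr \<beta>" using b l by (simp add: powr_mono2)
    then have "avg j m \<le> Ch Q / ennreal (l powr \<beta>)"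
      unfolding avg_def eq using l by (intro div_le_E3) auto
    then have "avg j m \<le> ennreal lam" using hypQ by (rule order.trans)
    then show False using g unfolding good_def using leD by blast
  qed
  have uniq: "j = j' \<and> m = m'"
    if mx: "maxl j m" "maxl j' m'" and xx: "x \<in> dcube a l j m" "x \<in> dcube a l j' m'" for j m j' m' x
  proof -
    have m: "m \<in> Zv" "m' \<in> Zv" using mx by (auto simp: maxl_def good_def)
    have "j = j'"
    proof (cases "j \<le> j'")
      case True
      have "dcube a l j' m' \<subseteq> dcube a l j m" by (rule dcube_nest[OF l True m xx])
      then show ?thesis using mx unfolding maxl_def by metis
    next
      case False
      then have F: "j' \<le> j" by simp
      have "dcube a l j m \<subseteq> dcube a l j' m'" by (rule dcube_nest[OF l F m(2) m(1) xx(2) xx(1)])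
      then show ?thesis using mx unfolding maxl_def by metis
    qed
    moreover have "m = idx a l j x" "m' = idx a l j' x"
      using xx mem_dcube[OF l m(1)] mem_dcube[OF l m(2)] by auto
    ultimately show ?thesis by simp
  qed
  have stop: "avg j (idx a l j x) \<le> ennreal lam"
    if x: "x \<in> Q" "x \<notin> (\<Union>(b, s)\<in>K. hcube b s)" and j: "0 \<le> j" for x j
  proof (rule ccontr)
    assume "\<not> avg j (idx a l j x) \<le> ennreal lam"
    then have lt: "ennreal lam < avg j (idx a l j x)" by simp
    have xin: "x \<in> dcube a l j (idx a l j x)" by (rule in_own_dcube[OF l])
    have "dcube a l j (idx a l j x) \<subseteq> Q"
      unfolding Q00 by (rule dcube_nest[OF l j zero_Zv idx_Zv]) (use x Q00 xin in auto)
    then have gj: "good j (idx a l j x)" using lt idx_Zv by (simp add: good_def)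
    define N where "N = {n::nat. good (int n + 1) (idx a l (int n + 1) x)}"
    have "nat (j - 1) \<in> N" using gj good_pos[OF gj] by (simp add: N_def)
    then have n0N: "(LEAST n. n \<in> N) \<in> N" by (rule LeastI)
    define j0 where "j0 = int (LEAST n. n \<in> N) + 1"
    define m0 where "m0 = idx a l j0 x"
    have g0: "good j0 m0" using n0N by (simp add: N_def j0_def m0_def)
    have "maxl j0 m0" unfolding maxl_def
    proof (intro conjI allI impI g0)
      fix j' m' assume g': "good j' m'" and sub: "dcube a l j0 m0 \<subseteq> dcube a l j' m'"
      have x0: "x \<in> dcube a l j0 m0" unfolding m0_def by (rule in_own_dcube[OF l])
      then have "x \<in> dcube a l j' m'" using sub by blast
      moreover have "m' \<in> Zv" using g' by (simp add: good_def)
      ultimately have m': "m' = idx a l j' x" using mem_dcube[OF l] by blast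
      have j'1: "1 \<le> j'" by (rule good_pos[OF g'])
      then have "nat (j' - 1) \<in> N" using g' m' by (simp add: N_def)
      then have "(LEAST n. n \<in> N) \<le> nat (j' - 1)" by (rule Least_le)
      then have "j0 \<le> j'" using j'1 by (simp add: j0_def)
      moreover have "sz l j0 \<le> sz l j'"
        using hcube_size[OF sz_pos[OF l]] sub by (simp add: dcube_def)
      then have "j' \<le> j0" using sz_mono_iff[OF l] by simp
      ultimately show "j' = j0" by simp
    qed
    then have "(a + sz l j0 *\<^sub>R m0, sz l j0) \<in> K" unfolding K_def by blast
    moreover have "x \<in> hcube (a + sz l j0 *\<^sub>R m0) (sz l j0)"
      using in_own_dcube[OF l, of x a j0] by (simp add: dcube_def m0_def)
    ultimately show False using x(2) by blast
  qed
  have upper: "Ch (dcube a l j m) / ennreal (sz l j powr \<beta>) \<le> ennreal (2 powr \<beta> * lam)"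
    if mx: "maxl j m" for j m
  proof -
    have g: "good j m" using mx by (simp add: maxl_def)
    have m: "m \<in> Zv" and sub: "dcube a l j m \<subseteq> Q" using g by (auto simp: good_def)
    have j1: "1 \<le> j" by (rule good_pos[OF g])
    define x where "x = a + sz l j *\<^sub>R m"
    have x: "x \<in> dcube a l j m" unfolding x_def by (rule corner_in_dcube[OF l])
    define P where "P = dcube a l (j - 1) (idx a l (j - 1) x)"
    have xP: "x \<in> P" unfolding P_def by (rule in_own_dcube[OF l])
    have sP: "dcube a l j m \<subseteq> P" unfolding P_def
      by (rule dcube_nest[OF l _ idx_Zv m xP[unfolded P_def] x]) simp
    have PQ: "P \<subseteq> Q" unfolding Q00 P_def
      by (rule dcube_nest[OF l _ zero_Zv idx_Zv]) (use j1 x sub Q00 xP P_def in auto)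
    have ng: "\<not> good (j - 1) (idx a l (j - 1) x)"
    proof
      assume "good (j - 1) (idx a l (j - 1) x)"
      then have "j - 1 = j" using mx sP unfolding maxl_def P_def by blast
      then show False by simp
    qed
    then have "\<not> ennreal lam < avg (j - 1) (idx a l (j - 1) x)"
      using PQ idx_Zv[of a l "j - 1" x] unfolding good_def P_def by blast
    then have "avg (j - 1) (idx a l (j - 1) x) \<le> ennreal lam" by (simp add: not_less)
    then have "Ch P \<le> ennreal lam * ennreal (sz l (j - 1) powr \<beta>)"
      unfolding avg_def P_def[symmetric] by (rule div_le_E1[rotated]) (use sz_pos[OF l, of "j - 1"] in simp)
    also have "sz l (j - 1) powr \<beta> = 2 powr \<beta> * sz l j powr \<beta>"
      using sz_pos[OF l, of j] by (simp add: sz_minus1 powr_mult)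
    finally have "Ch (dcube a l j m) \<le> ennreal lam * ennreal (2 powr \<beta> * sz l j powr \<beta>)"
      using sP unfolding Ch_def by (meson choq_mono order.trans)
    also have "\<dots> = ennreal (2 powr \<beta> * lam) * ennreal (sz l j powr \<beta>)"
      using lam by (simp add: ennreal_mult'[symmetric] mult_ac)
    finally have "Ch (dcube a l j m) \<le> ennreal (sz l j powr \<beta>) * ennreal (2 powr \<beta> * lam)"
      by (simp add: mult.commute)
    then show ?thesis
      by (intro divide_le_posI_ennreal) (use sz_pos[OF l, of j] in simp_all)
  qed
  have null: "dyadic_content \<beta> a l {x \<in> Q - (\<Union>(b, s)\<in>K. hcube b s). \<bar>f x\<bar> > lam} = 0"
  proof -
    define E where "E = {x \<in> Q - (\<Union>(b, s)\<in>K. hcube b s). \<bar>f x\<bar> > lam}"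
    define En where "En n = {x \<in> E. lam + inverse (real (Suc n)) < \<bar>f x\<bar>}" for n
    define D where "D = real DIM('a)"
    have D: "1 \<le> D" by (simp add: D_def DIM_positive Suc_leI)
    have qc: "dyadic_quasicont \<beta> a l f" using assms(4) by (simp add: dyadic_L1_def)
    have EE: "E \<subseteq> (\<Union>n. En n)"
    proof
      fix x assume x: "x \<in> E"
      then have "0 < \<bar>f x\<bar> - lam" by (simp add: E_def)
      then obtain k :: nat where k: "k > 0" "inverse (real k) < \<bar>f x\<bar> - lam"
        using ex_inverse_of_nat_less by blast
      then have "Suc (k - 1) = k" by simp
      then have "x \<in> En (k - 1)" using x k by (simp add: En_def)
      then show "x \<in> (\<Union>n. En n)" by blast
    qed
    have each: "dyadic_content \<beta> a l (En n) = 0" for n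
    proof -
      define \<delta> where "\<delta> = inverse (real (Suc n))"
      have dl: "0 < \<delta>" by (simp add: \<delta>_def)
      define c where "c = lam + \<delta> / 2"
      have c: "0 < c" "lam < c" using lam dl by (auto simp: c_def)
      have "dyadic_content \<beta> a l (En n) \<le> 0"
      proof (rule ennreal_le_epsilon)
        fix \<epsilon> :: real assume eps: "0 < \<epsilon>"
        obtain U where U: "open U" "dyadic_content \<beta> a l U < ennreal \<epsilon>" "continuous_on (Q - U) f"
          using qc eps unfolding dyadic_quasicont_def Q_def by blast
        define GJ where "GJ J = {x \<in> En n - U. \<forall>y\<in>Q - U. dist y x \<le> D * sz l (int J) \<longrightarrow> c < \<bar>f y\<bar>}" for J :: nat
        have cov: "En n - U \<subseteq> (\<Union>J. GJ J)"
        proof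
          fix x assume x: "x \<in> En n - U"
          then have xQ: "x \<in> Q - U" and fx: "lam + \<delta> < \<bar>f x\<bar>"
            by (auto simp: En_def E_def \<delta>_def)
          obtain \<rho> where rho: "0 < \<rho>" "\<forall>y\<in>Q - U. dist y x < \<rho> \<longrightarrow> dist (f y) (f x) < \<delta> / 2"
            using U(3) xQ dl unfolding continuous_on_iff by (meson half_gt_zero)
          obtain J :: nat where J: "D * l / \<rho> < 2 ^ J" using real_arch_pow[of 2] by auto
          have szeq: "sz l (int J) = l / 2 ^ J"
            by (simp add: sz_def powr_minus divide_inverse powr_realpow mult.commute)
          have "D * l < \<rho> * 2 ^ J" using J rho by (simp add: pos_divide_less_eq mult.commute)
          then have "D * l / 2 ^ J < \<rho>" by (simp add: pos_divide_less_eq)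
          then have szJ: "D * sz l (int J) < \<rho>" by (simp add: szeq)
          have "x \<in> GJ J" unfolding GJ_def
          proof (intro CollectI conjI ballI impI)
            show "x \<in> En n - U" by fact
            fix y assume y: "y \<in> Q - U" "dist y x \<le> D * sz l (int J)"
            then have "dist (f y) (f x) < \<delta> / 2" using rho szJ by auto
            then show "c < \<bar>f y\<bar>" using fx by (simp add: c_def dist_real_def abs_if split: if_splits)
          qed
          then show "x \<in> (\<Union>J. GJ J)" by blast
        qed
        have GJ0: "dyadic_content \<beta> a l (GJ J) = 0" for J
        proof (rule density_zero[OF l b _ _, of "lam / c" _ "int J"])
          show "0 \<le> lam / c" using lam c by simp
          show "lam / c < 1" using lam c by simp
          fix x j assume x: "x \<in> GJ J" and jJ: "int J \<le> j"
          define R where "R = dcube a l j (idx a l j x)"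
          define S where "S = GJ J \<inter> R"
          have xE: "x \<in> Q" "x \<notin> (\<Union>(b, s)\<in>K. hcube b s)"
            using x by (auto simp: GJ_def En_def E_def)
          have "avg j (idx a l j x) \<le> ennreal lam" by (rule stop[OF xE]) (use jJ in simp)
          then have ChR: "Ch R \<le> ennreal lam * ennreal (sz l j powr \<beta>)"
            unfolding avg_def R_def[symmetric] by (rule div_le_E1[rotated]) (use sz_pos[OF l, of j] in simp)
          have xR: "x \<in> R" unfolding R_def by (rule in_own_dcube[OF l])
          have "ennreal c * dyadic_content \<beta> a l S \<le> Ch R" unfolding Ch_def
          proof (rule choq_lower[OF c(1)])
            show "S \<subseteq> R" by (simp add: S_def)
            fix y assume y: "y \<in> S"
            then have yQ: "y \<in> Q - U" by (auto simp: S_def GJ_def En_def E_def)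
            have "dist y x \<le> D * sz l j"
              using y xR unfolding S_def R_def dcube_def D_def by (auto intro: hcube_dist)
            also have "\<dots> \<le> D * sz l (int J)"
              using D sz_mono_iff[OF l, of j "int J"] jJ by simp
            finally show "c < \<bar>f y\<bar>" using x yQ by (simp add: GJ_def)
          qed
          also note ChR
          finally have le1: "ennreal c * dyadic_content \<beta> a l S \<le> ennreal lam * ennreal (sz l j powr \<beta>)" .
          have "dyadic_content \<beta> a l S \<le> ennreal (sz l j powr \<beta>)"
            by (rule dc_cube[OF idx_Zv[of a l j x]]) (simp add: S_def R_def)
          then obtain h where h: "dyadic_content \<beta> a l S = ennreal h" "0 \<le> h"
            by (rule ennreal_finite_le) simp
          have "ennreal (c * h) \<le> ennreal (lam * sz l j powr \<beta>)"
            using le1 h c lam by (simp add: ennreal_mult'[symmetric])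
          then have "c * h \<le> lam * sz l j powr \<beta>"
            using lam by (simp add: ennreal_le_iff)
          then have "h \<le> lam / c * sz l j powr \<beta>" using c by (simp add: field_simps)
          then have "ennreal h \<le> ennreal (lam / c * sz l j powr \<beta>)" by (rule ennreal_leI)
          then show "dyadic_content \<beta> a l (GJ J \<inter> dcube a l j (idx a l j x))
              \<le> ennreal (lam / c) * ennreal (sz l j powr \<beta>)"
            using h lam c by (simp add: S_def R_def ennreal_mult'[symmetric])
        qed
        have "dyadic_content \<beta> a l (En n - U) \<le> dyadic_content \<beta> a l (\<Union>J. GJ J)"
          by (rule dc_mono[OF cov])
        also have "\<dots> \<le> (\<Sum>J. dyadic_content \<beta> a l (GJ J))" by (rule dc_subadd)
        also have "\<dots> = 0" using GJ0 by simp
        finally have z: "dyadic_content \<beta> a l (En n - U) = 0" by simp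
        have "dyadic_content \<beta> a l (En n) \<le> dyadic_content \<beta> a l (U \<union> (En n - U))"
          by (rule dc_mono) blast
        also have "\<dots> \<le> dyadic_content \<beta> a l U + dyadic_content \<beta> a l (En n - U)" by (rule dc_Un)
        also have "\<dots> \<le> ennreal \<epsilon>" using U(2) z by simp
        finally show "dyadic_content \<beta> a l (En n) \<le> 0 + ennreal \<epsilon>" by simp
      qed
      then show ?thesis by simp
    qed
    have "dyadic_content \<beta> a l E \<le> dyadic_content \<beta> a l (\<Union>n. En n)" by (rule dc_mono[OF EE])
    also have "\<dots> \<le> (\<Sum>n. dyadic_content \<beta> a l (En n))" by (rule dc_subadd)
    also have "\<dots> = 0" using each by simp
    finally show ?thesis by (simp add: E_def)
  qed
  have Kc: "countable K"
  proof -
    have "K \<subseteq> (\<lambda>(j, m). (a + sz l j *\<^sub>R m, sz l j)) ` (UNIV \<times> Zv)"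
      unfolding K_def maxl_def good_def by auto
    moreover have "countable ((\<lambda>(j, m). (a + sz l j *\<^sub>R m, sz l j)) ` ((UNIV :: int set) \<times> Zv))"
      using countable_Zv by (intro countable_image countable_SIGMA) auto
    ultimately show ?thesis by (rule countable_subset)
  qed
  have Kp: "K \<subseteq> dyadic_params a l"
    unfolding K_def maxl_def good_def using dcube_params by blast
  have KQ: "\<forall>(b, s)\<in>K. hcube b s \<subseteq> hcube a l"
    unfolding K_def maxl_def good_def Q_def dcube_def by auto
  have Kd: "\<forall>p\<in>K. \<forall>q\<in>K. p \<noteq> q \<longrightarrow> hcube (fst p) (snd p) \<inter> hcube (fst q) (snd q) = {}"
  proof (intro ballI impI)
    fix p q assume p: "p \<in> K" and q: "q \<in> K" and pq: "p \<noteq> q"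
    obtain j m where jm: "p = (a + sz l j *\<^sub>R m, sz l j)" "maxl j m" using p K_def by blast
    obtain j' m' where jm': "q = (a + sz l j' *\<^sub>R m', sz l j')" "maxl j' m'" using q K_def by blast
    show "hcube (fst p) (snd p) \<inter> hcube (fst q) (snd q) = {}"
    proof (rule ccontr)
      assume "hcube (fst p) (snd p) \<inter> hcube (fst q) (snd q) \<noteq> {}"
      then obtain x where "x \<in> dcube a l j m" "x \<in> dcube a l j' m'"
        using jm jm' by (auto simp: dcube_def)
      then have "j = j' \<and> m = m'" using uniq jm(2) jm'(2) by blast
      then show False using pq jm jm' by simp
    qed
  qed
  have Kb: "\<forall>(b, s)\<in>K.
        ennreal lam < dyadic_choquet \<beta> a l (hcube b s) (\<lambda>x. \<bar>f x\<bar>) / ennreal (s powr \<beta>) \<and>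
        dyadic_choquet \<beta> a l (hcube b s) (\<lambda>x. \<bar>f x\<bar>) / ennreal (s powr \<beta>) \<le> ennreal (2 powr \<beta> * lam)"
  proof (safe)
    fix b s assume "(b, s) \<in> K"
    then obtain j m where jm: "b = a + sz l j *\<^sub>R m" "s = sz l j" "maxl j m" unfolding K_def by blast
    have "ennreal lam < avg j m" using jm(3) by (simp add: maxl_def good_def)
    then show "ennreal lam < dyadic_choquet \<beta> a l (hcube b s) (\<lambda>x. \<bar>f x\<bar>) / ennreal (s powr \<beta>)"
      using jm by (simp add: avg_def Ch_def dcube_def)
    show "dyadic_choquet \<beta> a l (hcube b s) (\<lambda>x. \<bar>f x\<bar>) / ennreal (s powr \<beta>) \<le> ennreal (2 powr \<beta> * lam)"
      using upper[OF jm(3)] jm by (simp add: Ch_def dcube_def)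
  qed
  have Kh: "hausdorff_measure \<beta> {x \<in> hcube a l - (\<Union>(b, s)\<in>K. hcube b s). \<bar>f x\<bar> > lam} = 0"
    using hausdorff_zero[OF l b null] by (simp add: Q_def)
  show ?thesis using Kc Kp KQ Kd Kb Kh by blast
qed

end
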